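(* Let $X$ be a finite set with at least four elements and let $\Lambda$ be a nontrivial finite distributive lattice. Then for every field $k$, the monoid algebra $k\Lambda^{X\times X}$ of the monoid of $\Lambda$-generalized correspondences on $X$ is of infinite representation type.
   Context: A $\Lambda$-generalized correspondence on $X$ is a function $X\times X\to\Lambda$. The product of two such, $R$ and $S$, is defined by $RS(x,z)=\bigvee_{y\in X} R(x,y)\wedge S(y,z)$ for all $x,z\in X$; with this product the set $\Lambda^{X\times X}$ is a monoid. Nontrivial means $\Lambda$ has more than one element. A finite-dimensional $k$-algebra is of infinite representation type if it has infinitely many isomorphism classes of finite-dimensional indecomposable modules. *)

theory Defs
  imports Main "Jordan_Normal_Form.Matrix"
begin

text \<open>Lambda is a finite distributive lattice; being finite and nonempty it is bounded,
  so we work in the class of bounded distributive lattices (top/bot are then forced).\<close>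

type_synonym ('x, 'l) corr = "'x \<Rightarrow> 'x \<Rightarrow> 'l"

definition corr_mult :: "('x::finite, 'l::{distrib_lattice,bounded_lattice}) corr
    \<Rightarrow> ('x, 'l) corr \<Rightarrow> ('x, 'l) corr" where
  "corr_mult R S = (\<lambda>x z. Sup_fin {inf (R x y) (S y z) | y. True})"

definition corr_one :: "('x::finite, 'l::{distrib_lattice,bounded_lattice}) corr" where
  "corr_one = (\<lambda>x y. if x = y then Orderings.top else Orderings.bot)"

text \<open>A finite-dimensional (unital) module over the monoid algebra k[M], M the monoid
  of correspondences, is the same thing as a matrix representation of M:
  a pair (n, rho) with rho a monoid homomorphism from M into the n x n matrices over k.\<close>

definition is_rep :: "nat \<Rightarrow> (('x::finite, 'l::{distrib_lattice,bounded_lattice}) corr \<Rightarrow> 'k::field mat) \<Rightarrow> bool" where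
  "is_rep n \<rho> \<longleftrightarrow> (\<forall>a. \<rho> a \<in> carrier_mat n n) \<and> \<rho> corr_one = 1\<^sub>m n
     \<and> (\<forall>a b. \<rho> (corr_mult a b) = \<rho> a * \<rho> b)"

definition rep_iso :: "nat \<times> (('x::finite, 'l::{distrib_lattice,bounded_lattice}) corr \<Rightarrow> 'k::field mat)
    \<Rightarrow> nat \<times> (('x, 'l) corr \<Rightarrow> 'k mat) \<Rightarrow> bool" where
  "rep_iso r s \<longleftrightarrow> fst r = fst s \<and>
     (\<exists>P \<in> carrier_mat (fst r) (fst r). invertible_mat P \<and> (\<forall>a. P * snd r a = snd s a * P))"

definition rep_sum :: "nat \<times> (('x::finite, 'l::{distrib_lattice,bounded_lattice}) corr \<Rightarrow> 'k::field mat)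
    \<Rightarrow> nat \<times> (('x, 'l) corr \<Rightarrow> 'k mat) \<Rightarrow> nat \<times> (('x, 'l) corr \<Rightarrow> 'k mat)" where
  "rep_sum r s = (fst r + fst s,
     \<lambda>a. four_block_mat (snd r a) (0\<^sub>m (fst r) (fst s)) (0\<^sub>m (fst s) (fst r)) (snd s a))"

definition indecomposable :: "nat \<times> (('x::finite, 'l::{distrib_lattice,bounded_lattice}) corr \<Rightarrow> 'k::field mat) \<Rightarrow> bool" where
  "indecomposable r \<longleftrightarrow> is_rep (fst r) (snd r) \<and> fst r > 0 \<and>
     \<not> (\<exists>s t. is_rep (fst s) (snd s) \<and> is_rep (fst t) (snd t) \<and> fst s > 0 \<and> fst t > 0
            \<and> rep_iso r (rep_sum s t))"

definition infinite_rep_type :: "'k::field itself \<Rightarrow> ('x::finite, 'l::{distrib_lattice,bounded_lattice}) corr itself \<Rightarrow> bool" where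
  "infinite_rep_type _ _ \<longleftrightarrow>
     (\<exists>S :: (nat \<times> (('x, 'l) corr \<Rightarrow> 'k mat)) set. infinite S \<and> (\<forall>r\<in>S. indecomposable r)
        \<and> (\<forall>r\<in>S. \<forall>s\<in>S. rep_iso r s \<longrightarrow> r = s))"

end

theory Submission
  imports Defs
begin

definition bm :: "('x \<Rightarrow> 'x \<Rightarrow> bool) \<Rightarrow> ('x \<Rightarrow> 'x \<Rightarrow> bool) \<Rightarrow> ('x \<Rightarrow> 'x \<Rightarrow> bool)" where
  "bm S T = (\<lambda>x z. \<exists>y. S x y \<and> T y z)"

definition bperm :: "('x \<Rightarrow> 'x \<Rightarrow> bool) \<Rightarrow> bool" where
  "bperm R \<longleftrightarrow> (\<exists>g. bij g \<and> R = (\<lambda>x y. y = g x))"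

lemma bm_assoc: "bm (bm A B) C = bm A (bm B C)"
  unfolding bm_def by (auto simp: fun_eq_iff)

lemma bm_one_left[simp]: "bm (=) A = A" and bm_one_right[simp]: "bm A (=) = A"
  unfolding bm_def by (auto simp: fun_eq_iff)

lemma bperm_one: "bperm (=)"
  unfolding bperm_def by (rule exI[of _ id]) (auto simp: fun_eq_iff)

lemma bperm_mult: assumes "bperm S" "bperm T" shows "bperm (bm S T)"
proof -
  obtain g h where g: "bij g" "S = (\<lambda>x y. y = g x)" and h: "bij h" "T = (\<lambda>x y. y = h x)"
    using assms unfolding bperm_def by blast
  show ?thesis unfolding bperm_def
    by (rule exI[of _ "h \<circ> g"]) (use g h in \<open>auto simp: bm_def fun_eq_iff bij_comp\<close>)
qed

lemma bperm_inv: assumes "bperm S" shows "\<exists>S'. bperm S' \<and> bm S' S = (=) \<and> bm S S' = (=)"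
proof -
  obtain g where g: "bij g" "S = (\<lambda>x y. y = g x)"
    using assms unfolding bperm_def by blast
  have i: "bij (inv_into UNIV g)" using g bij_imp_bij_inv by blast
  have 1: "bm (\<lambda>x y. y = inv_into UNIV g x) S = (=)" using g
    by (auto simp: bm_def fun_eq_iff bij_inv_eq_iff) (metis bij_pointE)
  have 2: "bm S (\<lambda>x y. y = inv_into UNIV g x) = (=)" using g
    by (auto simp: bm_def fun_eq_iff bij_inv_eq_iff) (metis bij_pointE)
  show ?thesis using i 1 2 unfolding bperm_def by blast
qed

lemma right_inv_perm: fixes S :: "'x::finite \<Rightarrow> 'x \<Rightarrow> bool"
  assumes "bm S T = (=)" shows "bperm S"
proof -
  have e: "\<And>x z. (\<exists>y. S x y \<and> T y z) \<longleftrightarrow> x = z" using assms unfolding bm_def fun_eq_iff by blast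
  define f where "f x = (SOME y. S x y \<and> T y x)" for x
  have f: "S x (f x) \<and> T (f x) x" for x unfolding f_def by (rule someI_ex) (use e in blast)
  have "inj f"
  proof (rule injI)
    fix x z assume "f x = f z"
    hence "S x (f z) \<and> T (f z) z" using f by metis
    thus "x = z" using e by blast
  qed
  hence bf: "bij f" using finite_UNIV_inj_surj[of f] by (auto simp: bij_def)
  have "S x y \<longleftrightarrow> y = f x" for x y
  proof
    assume Sxy: "S x y"
    obtain w where w: "y = f w" using bf by (metis bij_pointE)
    have "S x y \<and> T y w" using Sxy f w by simp
    hence "x = w" using e by blast
    thus "y = f x" using w by simp
  next
    assume "y = f x" thus "S x y" using f by simp
  qed
  hence "S = (\<lambda>x y. y = f x)" by (auto simp: fun_eq_iff)
  thus ?thesis unfolding bperm_def using bf by blast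
qed

lemma left_inv_perm: fixes T :: "'x::finite \<Rightarrow> 'x \<Rightarrow> bool"
  assumes "bm S T = (=)" shows "bperm T"
proof -
  have e: "\<And>x z. (\<exists>y. S x y \<and> T y z) \<longleftrightarrow> x = z" using assms unfolding bm_def fun_eq_iff by blast
  define f where "f x = (SOME y. S x y \<and> T y x)" for x
  have f: "S x (f x) \<and> T (f x) x" for x unfolding f_def by (rule someI_ex) (use e in blast)
  have "inj f"
  proof (rule injI)
    fix x z assume "f x = f z"
    hence "S x (f z) \<and> T (f z) z" using f by metis
    thus "x = z" using e by blast
  qed
  hence bf: "bij f" using finite_UNIV_inj_surj[of f] by (auto simp: bij_def)
  have "T y z \<longleftrightarrow> z = inv_into UNIV f y" for y z
  proof
    assume Tyz: "T y z"
    obtain w where w: "y = f w" using bf by (metis bij_pointE)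
    have "S w y \<and> T y z" using Tyz f w by simp
    hence "w = z" using e by blast
    thus "z = inv_into UNIV f y" using w bf by (simp add: bij_is_inj)
  next
    assume "z = inv_into UNIV f y"
    hence "y = f z" using bf by (simp add: bij_inv_eq_iff)
    thus "T y z" using f by simp
  qed
  hence "T = (\<lambda>x y. y = inv_into UNIV f x)" by (auto simp: fun_eq_iff)
  thus ?thesis unfolding bperm_def using bf bij_imp_bij_inv by blast
qed

lemma bperm_factor: fixes S :: "'x::finite \<Rightarrow> 'x \<Rightarrow> bool"
  assumes "bperm (bm S T)" shows "bperm S" "bperm T"
proof -
  obtain P where P: "bperm P" "bm P (bm S T) = (=)" "bm (bm S T) P = (=)" using bperm_inv[OF assms] by blast
  have "bm S (bm T P) = (=)" using P(3) by (simp add: bm_assoc)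
  thus "bperm S" by (rule right_inv_perm)
  have "bm (bm P S) T = (=)" using P(2) by (simp add: bm_assoc)
  thus "bperm T" by (rule left_inv_perm)
qed

definition bprime :: "('x \<Rightarrow> 'x \<Rightarrow> bool) \<Rightarrow> bool" where
  "bprime R \<longleftrightarrow> \<not> bperm R \<and> (\<forall>S T. bm S T = R \<longrightarrow> bperm S \<or> bperm T)"

definition borb :: "('x \<Rightarrow> 'x \<Rightarrow> bool) \<Rightarrow> ('x \<Rightarrow> 'x \<Rightarrow> bool) set" where
  "borb R0 = {R. \<exists>u v. bperm u \<and> bperm v \<and> R = bm (bm u R0) v}"

lemma borb_self: "R0 \<in> borb R0"
  unfolding borb_def using bperm_one by force

lemma borb_left: fixes a :: "'x::finite \<Rightarrow> 'x \<Rightarrow> bool"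
  assumes "bperm a" shows "bm a b \<in> borb R0 \<longleftrightarrow> b \<in> borb R0"
proof
  assume "b \<in> borb R0"
  then obtain u v where "bperm u" "bperm v" "b = bm (bm u R0) v" unfolding borb_def by blast
  hence "bperm (bm a u) \<and> bperm v \<and> bm a b = bm (bm (bm a u) R0) v" using assms bperm_mult by (simp add: bm_assoc)
  thus "bm a b \<in> borb R0" unfolding borb_def by blast
next
  assume "bm a b \<in> borb R0"
  then obtain u v where uv: "bperm u" "bperm v" "bm a b = bm (bm u R0) v" unfolding borb_def by blast
  obtain a' where a': "bperm a'" "bm a' a = (=)" using bperm_inv[OF assms] by blast
  have "b = bm a' (bm a b)" using a' by (simp flip: bm_assoc)
  also have "\<dots> = bm (bm (bm a' u) R0) v" using uv by (simp add: bm_assoc)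
  finally show "b \<in> borb R0" unfolding borb_def using uv a' bperm_mult by blast
qed

lemma borb_right: fixes a :: "'x::finite \<Rightarrow> 'x \<Rightarrow> bool"
  assumes "bperm b" shows "bm a b \<in> borb R0 \<longleftrightarrow> a \<in> borb R0"
proof
  assume "a \<in> borb R0"
  then obtain u v where "bperm u" "bperm v" "a = bm (bm u R0) v" unfolding borb_def by blast
  hence "bperm u \<and> bperm (bm v b) \<and> bm a b = bm (bm u R0) (bm v b)" using assms bperm_mult by (simp add: bm_assoc)
  thus "bm a b \<in> borb R0" unfolding borb_def by blast
next
  assume "bm a b \<in> borb R0"
  then obtain u v where uv: "bperm u" "bperm v" "bm a b = bm (bm u R0) v" unfolding borb_def by blast
  obtain b' where b': "bperm b'" "bm b b' = (=)" using bperm_inv[OF assms] by blast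
  have "a = bm (bm a b) b'" using b' by (simp add: bm_assoc)
  also have "\<dots> = bm (bm u R0) (bm v b')" using uv by (simp add: bm_assoc)
  finally show "a \<in> borb R0" unfolding borb_def using uv b' bperm_mult by blast
qed

lemma borb_prime: fixes R0 :: "'x::finite \<Rightarrow> 'x \<Rightarrow> bool"
  assumes p: "bprime R0" and R: "R \<in> borb R0" shows "bprime R"
proof -
  obtain u v where uv: "bperm u" "bperm v" "R = bm (bm u R0) v" using R unfolding borb_def by blast
  obtain u' where u': "bperm u'" "bm u' u = (=)" "bm u u' = (=)" using bperm_inv[OF uv(1)] by blast
  obtain v' where v': "bperm v'" "bm v v' = (=)" "bm v' v = (=)" using bperm_inv[OF uv(2)] by blast
  have "bm (bm u' R) v' = bm (bm (bm u' u) R0) (bm v v')" using uv(3) by (simp add: bm_assoc)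
  hence R0: "R0 = bm (bm u' R) v'" using u' v' by simp
  show ?thesis unfolding bprime_def
  proof safe
    assume "bperm R" thus False using R0 p u' v' bperm_mult unfolding bprime_def by metis
  next
    fix S T assume ST: "R = bm S T" "\<not> bperm T"
    have "R0 = bm (bm u' S) (bm T v')" using R0 ST by (simp add: bm_assoc)
    hence "bperm (bm u' S) \<or> bperm (bm T v')" using p unfolding bprime_def by blast
    moreover have "\<not> bperm (bm T v')"
    proof
      assume "bperm (bm T v')"
      hence "bperm (bm (bm T v') v)" using bperm_mult uv by blast
      thus False using ST v' by (simp add: bm_assoc)
    qed
    ultimately have "bperm (bm u' S)" by blast
    hence "bperm (bm u (bm u' S))" using bperm_mult uv by blast
    thus "bperm S" using u' by (simp flip: bm_assoc)
  qed
qed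

definition cyc :: "('x \<Rightarrow> 'x) \<Rightarrow> bool" where
  "cyc p \<longleftrightarrow> (\<forall>Q. (\<exists>x. p x \<noteq> x \<and> Q x) \<longrightarrow> (\<forall>x. p x \<noteq> x \<longrightarrow> Q x \<longrightarrow> Q (p x)) \<longrightarrow> (\<forall>x. p x \<noteq> x \<longrightarrow> Q x))"

lemma prime_cycle: fixes p :: "'x::finite \<Rightarrow> 'x"
  assumes injp: "inj p" and p2: "\<And>x. p (p x) = x \<Longrightarrow> p x = x" and cy: "cyc p"
    and nt: "\<exists>x. p x \<noteq> x"
  shows "bprime (\<lambda>x y. y = x \<or> y = p x)"
proof -
  define R where "R = (\<lambda>x y. y = x \<or> y = p x)"
  have surjp: "surj p" by (rule finite_UNIV_inj_surj[OF finite_UNIV injp])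
  have nperm: "\<not> bperm R"
  proof
    assume "bperm R"
    then obtain g where g: "R = (\<lambda>x y. y = g x)" unfolding bperm_def by blast
    obtain x where x: "p x \<noteq> x" using nt by blast
    have h: "R x y \<longleftrightarrow> y = g x" for y using g by simp
    have "x = g x" "p x = g x" using h[of x] h[of "p x"] unfolding R_def by simp_all
    thus False using x by simp
  qed
  have "bperm S \<or> bperm T" if ST: "bm S T = R" for S T
  proof (rule ccontr)
    assume nST: "\<not> (bperm S \<or> bperm T)"
    have e: "(\<exists>y. S x y \<and> T y z) \<longleftrightarrow> z = x \<or> z = p x" for x z
    proof -
      have "bm S T x z = R x z" using ST by simp
      thus ?thesis unfolding bm_def R_def by simp
    qed
    define f where "f x = (SOME y. S x y \<and> T y x)" for x
    have f: "S x (f x) \<and> T (f x) x" for x unfolding f_def by (rule someI_ex) (use e in blast)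
    have "inj f"
    proof (rule injI)
      fix x x' assume ff: "f x = f x'"
      have "S x (f x') \<and> T (f x') x'" using f ff by metis
      hence 1: "x' = x \<or> x' = p x" using e by blast
      have "S x' (f x) \<and> T (f x) x" using f ff by metis
      hence 2: "x = x' \<or> x = p x'" using e by blast
      show "x = x'"
      proof (rule ccontr)
        assume "x \<noteq> x'"
        hence "x' = p x" "x = p x'" using 1 2 by auto
        hence "p (p x) = x" by simp
        hence "p x = x" by (rule p2)
        thus False using \<open>x' = p x\<close> \<open>x \<noteq> x'\<close> by simp
      qed
    qed
    hence bf: "bij f" using finite_UNIV_inj_surj[OF finite_UNIV, of f] by (auto simp: bij_def)
    have fsurj: "\<exists>w. y = f w" for y using bf by (metis bij_pointE)
    have Hs: "w = x \<or> w = p x" if "S x (f w)" for x w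
    proof -
      have "S x (f w) \<and> T (f w) w" using that f by simp
      thus ?thesis using e by blast
    qed
    have Ht: "z = w \<or> z = p w" if "T (f w) z" for w z
    proof -
      have "S w (f w) \<and> T (f w) z" using that f by simp
      thus ?thesis using e by blast
    qed
    have Hc: "T (f x) (p x) \<or> S x (f (p x))" for x
    proof -
      obtain y where y: "S x y" "T y (p x)" using e[of x "p x"] by blast
      obtain w where w: "y = f w" using fsurj by blast
      have "w = x \<or> w = p x" using Hs[of x w] y w by simp
      thus ?thesis using y w by blast
    qed
    have H7: "\<not> (S x (f (p x)) \<and> T (f (p x)) (p (p x)))" if px: "p x \<noteq> x" for x
    proof
      assume "S x (f (p x)) \<and> T (f (p x)) (p (p x))"
      hence "p (p x) = x \<or> p (p x) = p x" using e by blast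
      moreover have "p (p x) \<noteq> x" using p2 px by blast
      moreover have "p (p x) \<noteq> p x" using px injp by (metis injD)
      ultimately show False by blast
    qed
    have "\<not> (\<forall>x y. S x y \<longleftrightarrow> y = f x)"
    proof
      assume "\<forall>x y. S x y \<longleftrightarrow> y = f x"
      hence "S = (\<lambda>x y. y = f x)" by (auto simp: fun_eq_iff)
      hence "bperm S" unfolding bperm_def using bf by blast
      thus False using nST by blast
    qed
    then obtain x0 y0 where xy0: "S x0 y0" "y0 \<noteq> f x0" using f by blast
    obtain w0 where w0: "y0 = f w0" using fsurj by blast
    have "w0 = x0 \<or> w0 = p x0" using Hs[of x0 w0] xy0 w0 by simp
    hence "w0 = p x0" using xy0 w0 by blast
    hence x0: "S x0 (f (p x0))" "p x0 \<noteq> x0" using xy0 w0 by auto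
    have step: "\<forall>x. p x \<noteq> x \<longrightarrow> S x (f (p x)) \<longrightarrow> S (p x) (f (p (p x)))"
    proof (intro allI impI)
      fix x assume px: "p x \<noteq> x" and Q: "S x (f (p x))"
      have "\<not> T (f (p x)) (p (p x))" using H7[OF px] Q by blast
      thus "S (p x) (f (p (p x)))" using Hc[of "p x"] by blast
    qed
    have allQ: "\<forall>x. p x \<noteq> x \<longrightarrow> S x (f (p x))"
      using spec[OF cy[unfolded cyc_def], of "\<lambda>x. S x (f (p x))"] x0 step by blast
    have "\<not> (\<forall>w z. T (f w) z \<longrightarrow> z = w)"
    proof
      assume a: "\<forall>w z. T (f w) z \<longrightarrow> z = w"
      have "T y z \<longleftrightarrow> z = inv_into UNIV f y" for y z
      proof -
        obtain w where w: "y = f w" using fsurj by blast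
        have "inv_into UNIV f y = w" using w bf by (simp add: bij_is_inj)
        moreover have "T y z \<longleftrightarrow> z = w" using a f w by blast
        ultimately show ?thesis by simp
      qed
      hence "T = (\<lambda>x y. y = inv_into UNIV f x)" by (auto simp: fun_eq_iff)
      hence "bperm T" unfolding bperm_def using bf bij_imp_bij_inv by blast
      thus False using nST by blast
    qed
    then obtain w z where wz: "T (f w) z" "z \<noteq> w" by blast
    hence z: "z = p w" using Ht by blast
    hence pw: "p w \<noteq> w" using wz by simp
    obtain x where x: "w = p x" using surjp by (metis surjD)
    have px: "p x \<noteq> x" using x pw by auto
    have "S x (f (p x))" using allQ px by blast
    moreover have "T (f (p x)) (p (p x))" using wz z x by simp
    ultimately show False using H7[OF px] by blast
  qed
  hence "bprime R" unfolding bprime_def using nperm by blast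
  thus ?thesis unfolding R_def .
qed

definition p3 :: "'x \<Rightarrow> 'x \<Rightarrow> 'x \<Rightarrow> 'x \<Rightarrow> 'x" where
  "p3 a b c x = (if x = a then b else if x = b then c else if x = c then a else x)"
definition p4 :: "'x \<Rightarrow> 'x \<Rightarrow> 'x \<Rightarrow> 'x \<Rightarrow> 'x \<Rightarrow> 'x" where
  "p4 a b c d x = (if x = a then b else if x = b then c else if x = c then d else if x = d then a else x)"

definition R3 :: "'x \<Rightarrow> 'x \<Rightarrow> 'x \<Rightarrow> 'x \<Rightarrow> 'x \<Rightarrow> bool" where
  "R3 a b c = (\<lambda>x y. y = x \<or> y = p3 a b c x)"
definition R4 :: "'x \<Rightarrow> 'x \<Rightarrow> 'x \<Rightarrow> 'x \<Rightarrow> 'x \<Rightarrow> 'x \<Rightarrow> bool" where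
  "R4 a b c d = (\<lambda>x y. y = x \<or> y = p4 a b c d x)"

locale four = fixes a b c d :: "'x::finite"
  assumes dist: "a \<noteq> b" "a \<noteq> c" "a \<noteq> d" "b \<noteq> c" "b \<noteq> d" "c \<noteq> d"
begin


lemma prime3: "bprime (R3 a b c)"
  unfolding R3_def
proof (rule prime_cycle)
  show "inj (p3 a b c)" using dist by (auto simp: inj_def p3_def)
  show "p3 a b c (p3 a b c x) = x \<Longrightarrow> p3 a b c x = x" for x using dist by (auto simp: p3_def split: if_splits)
  show "\<exists>x. p3 a b c x \<noteq> x" using dist by (auto simp: p3_def intro!: exI[of _ a])
  show "cyc (p3 a b c)" unfolding cyc_def
  proof (intro allI impI)
    fix Q x assume h: "\<exists>x. p3 a b c x \<noteq> x \<and> Q x" "\<forall>x. p3 a b c x \<noteq> x \<longrightarrow> Q x \<longrightarrow> Q (p3 a b c x)"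
      "p3 a b c x \<noteq> x"
    have pa: "p3 a b c a = b" "p3 a b c b = c" "p3 a b c c = a" using dist by (auto simp: p3_def)
    have s: "Q a \<Longrightarrow> Q b" "Q b \<Longrightarrow> Q c" "Q c \<Longrightarrow> Q a"
      using spec[OF h(2), of a] spec[OF h(2), of b] spec[OF h(2), of c] pa dist by auto
    have m: "p3 a b c y \<noteq> y \<Longrightarrow> y = a \<or> y = b \<or> y = c" for y by (auto simp: p3_def split: if_splits)
    have "Q a \<or> Q b \<or> Q c" using h(1) m by blast
    hence "Q a \<and> Q b \<and> Q c" using s by blast
    thus "Q x" using m[OF h(3)] by blast
  qed
qed

lemma prime4: "bprime (R4 a b c d)"
  unfolding R4_def
proof (rule prime_cycle)
  show "inj (p4 a b c d)" using dist by (auto simp: inj_def p4_def)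
  show "p4 a b c d (p4 a b c d x) = x \<Longrightarrow> p4 a b c d x = x" for x using dist by (auto simp: p4_def split: if_splits)
  show "\<exists>x. p4 a b c d x \<noteq> x" using dist by (auto simp: p4_def intro!: exI[of _ a])
  show "cyc (p4 a b c d)" unfolding cyc_def
  proof (intro allI impI)
    fix Q x assume h: "\<exists>x. p4 a b c d x \<noteq> x \<and> Q x" "\<forall>x. p4 a b c d x \<noteq> x \<longrightarrow> Q x \<longrightarrow> Q (p4 a b c d x)"
      "p4 a b c d x \<noteq> x"
    have pa: "p4 a b c d a = b" "p4 a b c d b = c" "p4 a b c d c = d" "p4 a b c d d = a" using dist by (auto simp: p4_def)
    have s: "Q a \<Longrightarrow> Q b" "Q b \<Longrightarrow> Q c" "Q c \<Longrightarrow> Q d" "Q d \<Longrightarrow> Q a"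
      using spec[OF h(2), of a] spec[OF h(2), of b] spec[OF h(2), of c] spec[OF h(2), of d] pa dist by auto
    have m: "p4 a b c d y \<noteq> y \<Longrightarrow> y = a \<or> y = b \<or> y = c \<or> y = d" for y by (auto simp: p4_def split: if_splits)
    have "Q a \<or> Q b \<or> Q c \<or> Q d" using h(1) m by blast
    hence "Q a \<and> Q b \<and> Q c \<and> Q d" using s by blast
    thus "Q x" using m[OF h(3)] by blast
  qed
qed

lemma not_in_orb: "R4 a b c d \<notin> borb (R3 a b c)"
proof
  assume "R4 a b c d \<in> borb (R3 a b c)"
  then obtain u v where uv: "bperm u" "bperm v" "R4 a b c d = bm (bm u (R3 a b c)) v" unfolding borb_def by blast
  obtain g h where g: "bij g" "u = (\<lambda>x y. y = g x)" and h: "bij h" "v = (\<lambda>x y. y = h x)"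
    using uv unfolding bperm_def by blast
  have e: "R4 a b c d x z \<longleftrightarrow> (\<exists>y. R3 a b c (g x) y \<and> z = h y)" for x z
    using uv(3) g h unfolding bm_def fun_eq_iff by auto
  have two: "g x = a \<or> g x = b \<or> g x = c" if "p4 a b c d x \<noteq> x" for x
  proof -
    obtain y1 where y1: "R3 a b c (g x) y1" "x = h y1" using e[of x x] unfolding R4_def by blast
    obtain y2 where y2: "R3 a b c (g x) y2" "p4 a b c d x = h y2" using e[of x "p4 a b c d x"] unfolding R4_def by blast
    have "y1 \<noteq> y2" using y1 y2 that by metis
    hence "p3 a b c (g x) \<noteq> g x" using y1 y2 unfolding R3_def by metis
    thus ?thesis by (auto simp: p3_def split: if_splits)
  qed
  have "p4 a b c d a \<noteq> a" "p4 a b c d b \<noteq> b" "p4 a b c d c \<noteq> c" "p4 a b c d d \<noteq> d"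
    using dist by (auto simp: p4_def)
  hence "g a \<in> {a,b,c}" "g b \<in> {a,b,c}" "g c \<in> {a,b,c}" "g d \<in> {a,b,c}" using two by auto
  moreover have "inj g" using g bij_is_inj by blast
  ultimately show False using dist unfolding inj_def by auto
qed

end

lemma borb_sym: fixes R0 :: "'x::finite \<Rightarrow> 'x \<Rightarrow> bool"
  assumes "R \<in> borb R0" shows "R0 \<in> borb R"
proof -
  obtain u v where uv: "bperm u" "bperm v" "R = bm (bm u R0) v" using assms unfolding borb_def by blast
  obtain u' where u': "bperm u'" "bm u' u = (=)" "bm u u' = (=)" using bperm_inv[OF uv(1)] by blast
  obtain v' where v': "bperm v'" "bm v v' = (=)" "bm v' v = (=)" using bperm_inv[OF uv(2)] by blast
  have "bm (bm u' R) v' = bm (bm (bm u' u) R0) (bm v v')" using uv(3) by (simp add: bm_assoc)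
  hence R0: "R0 = bm (bm u' R) v'" using u' v' by simp
  thus ?thesis unfolding borb_def using u' v' by blast
qed

definition NA :: "nat \<Rightarrow> 'k::field mat" where
  "NA n = mat (2*n+1) (2*n+1) (\<lambda>(i,j). if j < n \<and> i = n + j then 1 else 0)"
definition NB :: "nat \<Rightarrow> 'k::field mat" where
  "NB n = mat (2*n+1) (2*n+1) (\<lambda>(i,j). if j < n \<and> i = n + j + 1 then 1 else 0)"

lemma NA_carrier[simp]: "NA n \<in> carrier_mat (2*n+1) (2*n+1)" unfolding NA_def by simp
lemma NB_carrier[simp]: "NB n \<in> carrier_mat (2*n+1) (2*n+1)" unfolding NB_def by simp
lemma NA_carrier'[simp]: "NA n \<in> carrier_mat (Suc (2*n)) (Suc (2*n))" unfolding NA_def by simp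
lemma NB_carrier'[simp]: "NB n \<in> carrier_mat (Suc (2*n)) (Suc (2*n))" unfolding NB_def by simp
lemma dim_NA[simp]: "dim_row (NA n) = Suc (2*n)" "dim_col (NA n) = Suc (2*n)" unfolding NA_def by simp_all
lemma dim_NB[simp]: "dim_row (NB n) = Suc (2*n)" "dim_col (NB n) = Suc (2*n)" unfolding NB_def by simp_all

lemma XNA: assumes X: "X \<in> carrier_mat (2*n+1) (2*n+1)" and i: "i < 2*n+1" and j: "j < 2*n+1"
  shows "(X * NA n) $$ (i,j) = (if j < n then X $$ (i, n+j) else (0::'k::field))"
proof -
  have "(X * NA n) $$ (i,j) = (\<Sum>k\<in>{0..<2*n+1}. X $$ (i,k) * (if j < n \<and> k = n + j then 1 else 0))"
    using X i j by (simp add: NA_def scalar_prod_def)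
  also have "\<dots> = (\<Sum>k\<in>{0..<2*n+1}. if k = n + j then (if j < n then X $$ (i,k) else 0) else 0)"
    by (rule sum.cong) auto
  also have "\<dots> = (if j < n then X $$ (i, n+j) else 0)" using j by (auto simp add: sum.delta')
  finally show ?thesis .
qed

lemma NAX: assumes X: "X \<in> carrier_mat (2*n+1) (2*n+1)" and i: "i < 2*n+1" and j: "j < 2*n+1"
  shows "(NA n * X) $$ (i,j) = (if n \<le> i \<and> i < 2*n then X $$ (i-n, j) else (0::'k::field))"
proof -
  have "(NA n * X) $$ (i,j) = (\<Sum>k\<in>{0..<2*n+1}. (if k < n \<and> i = n + k then 1 else 0) * X $$ (k,j))"
    using X i j by (simp add: NA_def scalar_prod_def)
  also have "\<dots> = (\<Sum>k\<in>{0..<2*n+1}. if k = i - n then (if n \<le> i \<and> i < 2*n then X $$ (k,j) else 0) else 0)"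
    by (rule sum.cong) auto
  also have "\<dots> = (if n \<le> i \<and> i < 2*n then X $$ (i-n, j) else 0)" using i by (auto simp add: sum.delta')
  finally show ?thesis .
qed

lemma XNB: assumes X: "X \<in> carrier_mat (2*n+1) (2*n+1)" and i: "i < 2*n+1" and j: "j < 2*n+1"
  shows "(X * NB n) $$ (i,j) = (if j < n then X $$ (i, n+j+1) else (0::'k::field))"
proof -
  have "(X * NB n) $$ (i,j) = (\<Sum>k\<in>{0..<2*n+1}. X $$ (i,k) * (if j < n \<and> k = n + j + 1 then 1 else 0))"
    using X i j by (simp add: NB_def scalar_prod_def)
  also have "\<dots> = (\<Sum>k\<in>{0..<2*n+1}. if k = n + j + 1 then (if j < n then X $$ (i,k) else 0) else 0)"
    by (rule sum.cong) (auto simp: mult_2)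
  also have "\<dots> = (if j < n then X $$ (i, n+j+1) else 0)" using j by (simp add: sum.delta' mult_2)
  finally show ?thesis .
qed

lemma NBX: assumes X: "X \<in> carrier_mat (2*n+1) (2*n+1)" and i: "i < 2*n+1" and j: "j < 2*n+1"
  shows "(NB n * X) $$ (i,j) = (if n + 1 \<le> i then X $$ (i-n-1, j) else (0::'k::field))"
proof -
  have "(NB n * X) $$ (i,j) = (\<Sum>k\<in>{0..<2*n+1}. (if k < n \<and> i = n + k + 1 then 1 else 0) * X $$ (k,j))"
    using X i j by (simp add: NB_def scalar_prod_def)
  also have "\<dots> = (\<Sum>k\<in>{0..<2*n+1}. if k = i - n - 1 then (if n + 1 \<le> i then X $$ (k,j) else 0) else 0)"
    using i by (intro sum.cong) auto
  also have "\<dots> = (if n + 1 \<le> i then X $$ (i-n-1, j) else 0)"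
    using i by (cases "n + 1 \<le> i") (simp_all add: sum.delta')
  finally show ?thesis .
qed

lemma commut_idem:
  fixes X :: "'k::field mat"
  assumes X: "X \<in> carrier_mat (2*n+1) (2*n+1)" and n: "0 < n"
    and A: "X * NA n = NA n * X" and B: "X * NB n = NB n * X" and I: "X * X = X"
  shows "X = 0\<^sub>m (2*n+1) (2*n+1) \<or> X = 1\<^sub>m (2*n+1)"
proof -
  define c where "c = X $$ (0,0)"
  have eA: "(if j < n then X $$ (i, n+j) else 0) = (if n \<le> i \<and> i < 2*n then X $$ (i-n, j) else 0)"
    if "i < 2*n+1" "j < 2*n+1" for i j
    using arg_cong[OF A, of "\<lambda>M. M $$ (i,j)"] XNA[OF X that] NAX[OF X that] by simp
  have eB: "(if j < n then X $$ (i, n+j+1) else 0) = (if n + 1 \<le> i then X $$ (i-n-1, j) else 0)"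
    if "i < 2*n+1" "j < 2*n+1" for i j
    using arg_cong[OF B, of "\<lambda>M. M $$ (i,j)"] XNB[OF X that] NBX[OF X that] by simp
  have UR: "X $$ (r,j) = 0" if "r < n" "n \<le> j" "j < 2*n+1" for r j
    using eA[of "r+n" j] that by simp
  have LU: "X $$ (n+r, n+s) = X $$ (r,s)" if "r < n" "s < n" for r s
    using eA[of "n+r" s] that by simp
  have Ld: "X $$ (2*n, n+s) = 0" if "s < n" for s
    using eA[of "2*n" s] that by simp
  have L0: "X $$ (n, n+s+1) = 0" if "s < n" for s
    using eB[of n s] that by simp
  have Lf: "X $$ (n+r+1, n+s+1) = X $$ (r,s)" if "r < n" "s < n" for r s
    using eB[of "n+r+1" s] that by simp
  have sh: "X $$ (r+1, s+1) = X $$ (r,s)" if "r+1 < n" "s+1 < n" for r s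
    using Lf[of r s] LU[of "r+1" "s+1"] that by simp
  have U0: "X $$ (0,s) = 0" if "0 < s" "s < n" for s
    using LU[of 0 s] L0[of "s-1"] that by simp
  have Un: "X $$ (n-1, s) = 0" if "s+1 < n" for s
  proof -
    have "X $$ (n+(n-1)+1, n+s+1) = X $$ (n-1,s)" using Lf[of "n-1" s] that by simp
    moreover have "n+(n-1)+1 = 2*n" using n by simp
    ultimately show ?thesis using Ld[of "s+1"] that by (simp add: mult_2)
  qed
  have shift: "r+t < n \<longrightarrow> s+t < n \<longrightarrow> X $$ (r+t, s+t) = X $$ (r,s)" for r s t
  proof (induction t)
    case (Suc t) thus ?case using sh[of "r+t" "s+t"] by simp
  qed simp
  have Ud: "X $$ (r,s) = (if r = s then c else 0)" if "r < n" "s < n" for r s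
  proof (cases r s rule: linorder_cases)
    case less
    hence "X $$ (0 + r, (s-r) + r) = X $$ (0, s-r)" using shift[of 0 r "s-r"] that by simp
    thus ?thesis using less U0[of "s-r"] that by simp
  next
    case equal
    thus ?thesis using shift[of 0 r 0] that by (simp add: c_def)
  next
    case greater
    hence "X $$ (r + (n-1-r), s + (n-1-r)) = X $$ (r,s)" using shift[of r "n-1-r" s] that by simp
    moreover have "r + (n-1-r) = n-1" using that by simp
    ultimately show ?thesis using greater Un[of "s + (n-1-r)"] that by simp
  qed
  have nLL: "X $$ (i,j) = (if i = j then c else 0)" if h: "i < 2*n+1" "j < 2*n+1" "\<not> (n \<le> i \<and> j < n)" for i j
  proof -
    consider "i < n" "j < n" | "i < n" "n \<le> j" | "n \<le> i" "n \<le> j" using h by (metis not_le)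
    thus ?thesis
    proof cases
      case 1 thus ?thesis using Ud by simp
    next
      case 2 thus ?thesis using UR h by simp
    next
      case 3
      define r s where "r = i - n" and "s = j - n"
      have ij: "i = n + r" "j = n + s" "r \<le> n" "s \<le> n" using 3 h r_def s_def by auto
      consider "r < n" "s < n" | "r = n" "s < n" | "s = n" "r = 0" | "s = n" "0 < r" using ij by (metis le_neq_implies_less not_gr0)
      thus ?thesis
      proof cases
        case 1 thus ?thesis using LU Ud ij by simp
      next
        case 2 thus ?thesis using Ld[of s] ij by (simp add: mult_2)
      next
        case 3 thus ?thesis using L0[of "n-1"] ij n by simp
      next
        case 4
        have "X $$ (n+(r-1)+1, n+(n-1)+1) = X $$ (r-1, n-1)" using Lf[of "r-1" "n-1"] 4 ij n by simp
        moreover have "n+(r-1)+1 = i" "n+(n-1)+1 = j" using 4 ij n by simp_all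
        ultimately show ?thesis using Ud[of "r-1" "n-1"] 4 ij n by auto
      qed
    qed
  qed
  have cc: "c * c = c"
  proof -
    have "(X * X) $$ (0,0) = (\<Sum>k\<in>{0..<2*n+1}. X $$ (0,k) * X $$ (k,0))"
      using X by (simp add: scalar_prod_def)
    also have "\<dots> = (\<Sum>k\<in>{0..<2*n+1}. if k = 0 then c * c else 0)"
      by (rule sum.cong) (use nLL n in auto)
    also have "\<dots> = c * c" by simp
    finally show ?thesis using I by (simp add: c_def)
  qed
  have LL: "X $$ (i,j) = 0" if "n \<le> i" "i < 2*n+1" "j < n" for i j
  proof -
    have "(X * X) $$ (i,j) = (\<Sum>k\<in>{0..<2*n+1}. X $$ (i,k) * X $$ (k,j))"
      using X that by (simp add: scalar_prod_def)
    also have "\<dots> = (\<Sum>k\<in>{0..<2*n+1}. (if k = i then c * X $$ (i,j) else 0) + (if k = j then c * X $$ (i,j) else 0))"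
    proof (rule sum.cong)
      fix k assume k: "k \<in> {0..<2*n+1}"
      show "X $$ (i,k) * X $$ (k,j) = (if k = i then c * X $$ (i,j) else 0) + (if k = j then c * X $$ (i,j) else 0)"
      proof -
        consider "k = i" | "k = j" | "k \<noteq> i" "k \<noteq> j" by blast
        thus ?thesis
        proof cases
          case 1 thus ?thesis using nLL[of i i] that by auto
        next
          case 2 thus ?thesis using nLL[of j j] that by auto
        next
          case 3
          show ?thesis
          proof (cases "k < n")
            case True thus ?thesis using nLL[of k j] 3 k that by auto
          next
            case False thus ?thesis using nLL[of i k] 3 k that by auto
          qed
        qed
      qed
    qed simp
    also have "\<dots> = c * X $$ (i,j) + c * X $$ (i,j)" using that by (simp add: sum.distrib)
    finally have "X $$ (i,j) = c * X $$ (i,j) + c * X $$ (i,j)" using I by simp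
    moreover have "c = 0 \<or> c = 1" using cc by (metis mult_cancel_left1 mult_zero_right)
    ultimately show ?thesis by (metis add_cancel_right_right mult_1 mult_zero_left)
  qed
  have all: "X $$ (i,j) = (if i = j then c else 0)" if "i < 2*n+1" "j < 2*n+1" for i j
    using nLL[OF that] LL[of i j] that by (cases "n \<le> i \<and> j < n") auto
  have "c = 0 \<or> c = 1" using cc by (metis mult_cancel_left1 mult_zero_right)
  thus ?thesis
  proof
    assume "c = 0" hence "X = 0\<^sub>m (2*n+1) (2*n+1)" using X all by (intro eq_matI) auto
    thus ?thesis by blast
  next
    assume "c = 1" hence "X = 1\<^sub>m (2*n+1)" using X all by (intro eq_matI) auto
    thus ?thesis by blast
  qed
qed

definition mrep :: "nat \<Rightarrow> 'k::field \<Rightarrow> 'k \<Rightarrow> 'k \<Rightarrow> 'k mat" where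
  "mrep n p c1 c2 = p \<cdot>\<^sub>m 1\<^sub>m (2*n+1) + (c1 \<cdot>\<^sub>m NA n + c2 \<cdot>\<^sub>m NB n)"

lemma mrep_carrier[simp]: "mrep n p c1 c2 \<in> carrier_mat (2*n+1) (2*n+1)"
  unfolding mrep_def by simp

lemma ZW_zero:
  fixes c1 c2 d1 d2 :: "'k::field"
  shows "(c1 \<cdot>\<^sub>m NA n + c2 \<cdot>\<^sub>m NB n) * (d1 \<cdot>\<^sub>m NA n + d2 \<cdot>\<^sub>m NB n) = 0\<^sub>m (2*n+1) (2*n+1)"
proof (rule eq_matI)
  fix i j assume i: "i < dim_row (0\<^sub>m (2*n+1) (2*n+1) :: 'k mat)" and j: "j < dim_col (0\<^sub>m (2*n+1) (2*n+1) :: 'k mat)"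
  have "((c1 \<cdot>\<^sub>m NA n + c2 \<cdot>\<^sub>m NB n) * (d1 \<cdot>\<^sub>m NA n + d2 \<cdot>\<^sub>m NB n)) $$ (i,j)
     = (\<Sum>k\<in>{0..<2*n+1}. (c1 * (if k < n \<and> i = n + k then 1 else 0) + c2 * (if k < n \<and> i = n + k + 1 then 1 else 0))
           * (d1 * (if j < n \<and> k = n + j then 1 else 0) + d2 * (if j < n \<and> k = n + j + 1 then 1 else 0)))"
    using i j by (simp add: scalar_prod_def NA_def NB_def)
  also have "\<dots> = 0" by (rule sum.neutral) auto
  finally show "((c1 \<cdot>\<^sub>m NA n + c2 \<cdot>\<^sub>m NB n) * (d1 \<cdot>\<^sub>m NA n + d2 \<cdot>\<^sub>m NB n)) $$ (i,j) = 0\<^sub>m (2*n+1) (2*n+1) $$ (i,j)"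
    using i j by simp
qed auto

lemma mrep_mult:
  fixes p c1 c2 q d1 d2 :: "'k::field"
  shows "mrep n p c1 c2 * mrep n q d1 d2 = mrep n (p*q) (c1*q + p*d1) (c2*q + p*d2)"
proof -
  let ?m = "2*n+1"
  let ?Z = "c1 \<cdot>\<^sub>m NA n + c2 \<cdot>\<^sub>m NB n :: 'k mat"
  let ?W = "d1 \<cdot>\<^sub>m NA n + d2 \<cdot>\<^sub>m NB n :: 'k mat"
  have Z: "?Z \<in> carrier_mat ?m ?m" and W: "?W \<in> carrier_mat ?m ?m" by simp_all
  have P: "p \<cdot>\<^sub>m 1\<^sub>m ?m \<in> carrier_mat ?m ?m" and Q: "q \<cdot>\<^sub>m 1\<^sub>m ?m \<in> carrier_mat ?m ?m" by simp_all
  have "mrep n p c1 c2 * mrep n q d1 d2 = (p \<cdot>\<^sub>m 1\<^sub>m ?m + ?Z) * (q \<cdot>\<^sub>m 1\<^sub>m ?m + ?W)"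
    unfolding mrep_def by simp
  also have "\<dots> = (p \<cdot>\<^sub>m 1\<^sub>m ?m) * (q \<cdot>\<^sub>m 1\<^sub>m ?m + ?W) + ?Z * (q \<cdot>\<^sub>m 1\<^sub>m ?m + ?W)"
    by (rule add_mult_distrib_mat[OF P Z, of _ ?m]) simp
  also have "(p \<cdot>\<^sub>m 1\<^sub>m ?m) * (q \<cdot>\<^sub>m 1\<^sub>m ?m + ?W) = p \<cdot>\<^sub>m (q \<cdot>\<^sub>m 1\<^sub>m ?m + ?W)"
    by (subst mult_smult_assoc_mat[of _ ?m ?m _ ?m]) auto
  also have "?Z * (q \<cdot>\<^sub>m 1\<^sub>m ?m + ?W) = ?Z * (q \<cdot>\<^sub>m 1\<^sub>m ?m) + ?Z * ?W"
    by (rule mult_add_distrib_mat[OF Z Q W])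
  also have "?Z * (q \<cdot>\<^sub>m 1\<^sub>m ?m) = q \<cdot>\<^sub>m ?Z"
    by (subst mult_smult_distrib[of _ ?m ?m _ ?m]) auto
  also have "?Z * ?W = 0\<^sub>m ?m ?m" by (rule ZW_zero)
  finally have e: "mrep n p c1 c2 * mrep n q d1 d2 = p \<cdot>\<^sub>m (q \<cdot>\<^sub>m 1\<^sub>m ?m + ?W) + (q \<cdot>\<^sub>m ?Z + 0\<^sub>m ?m ?m)" .
  have f: "p \<cdot>\<^sub>m (q \<cdot>\<^sub>m 1\<^sub>m ?m + ?W) + (q \<cdot>\<^sub>m ?Z + 0\<^sub>m ?m ?m) = mrep n (p*q) (c1*q + p*d1) (c2*q + p*d2)"
    unfolding mrep_def by (rule eq_matI) (auto simp: algebra_simps)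
  show ?thesis using trans[OF e f] .
qed

lemma four_elems:
  assumes "card (UNIV :: 'x::finite set) \<ge> 4"
  shows "\<exists>a b c d :: 'x. a \<noteq> b \<and> a \<noteq> c \<and> a \<noteq> d \<and> b \<noteq> c \<and> b \<noteq> d \<and> c \<noteq> d"
proof -
  obtain T :: "'x set" where T0: "card T = 4"
    using obtain_subset_with_card_n[OF assms] by blast
  hence T: "card T = Suc (Suc (Suc (Suc 0)))" by simp
  obtain a T1 where 1: "T = insert a T1" "a \<notin> T1" "card T1 = Suc (Suc (Suc 0))" using card_eq_SucD[OF T] by blast
  obtain b T2 where 2: "T1 = insert b T2" "b \<notin> T2" "card T2 = Suc (Suc 0)" using card_eq_SucD[OF 1(3)] by blast
  obtain c T3 where 3: "T2 = insert c T3" "c \<notin> T3" "card T3 = Suc 0" using card_eq_SucD[OF 2(3)] by blast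
  obtain d where 4: "T3 = {d}" using card_eq_SucD[OF 3(3)] by blast
  have "a \<noteq> b \<and> a \<noteq> c \<and> a \<noteq> d \<and> b \<noteq> c \<and> b \<noteq> d \<and> c \<noteq> d" using 1(2) 2(2) 3(2) unfolding 2(1) 3(1) 4 by simp
  thus ?thesis by blast
qed

lemma atom_exists:
  assumes "card (UNIV :: 'l::{finite,bounded_lattice} set) > 1"
  shows "\<exists>atm::'l. atm \<noteq> bot \<and> (\<forall>x. x \<le> atm \<longrightarrow> x = bot \<or> x = atm)"
proof -
  have ne: "{x::'l. x \<noteq> bot} \<noteq> {}"
  proof
    assume "{x::'l. x \<noteq> bot} = {}"
    hence "(UNIV :: 'l set) = {bot}" by auto
    hence "card (UNIV :: 'l set) = card {bot::'l}" by (rule arg_cong)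
    thus False using assms by simp
  qed
  have fin: "finite {x::'l. x \<noteq> bot}" by simp
  obtain m where m: "m \<in> {x::'l. x \<noteq> bot}" "\<forall>b \<in> {x::'l. x \<noteq> bot}. b \<le> m \<longrightarrow> m = b"
    using finite_has_minimal[OF fin ne] by blast
  have "\<forall>x. x \<le> m \<longrightarrow> x = bot \<or> x = m" using m(2) by auto
  thus ?thesis using m(1) by blast
qed

definition phiR :: "'l::{finite,distrib_lattice,bounded_lattice} \<Rightarrow> ('x, 'l) corr \<Rightarrow> ('x \<Rightarrow> 'x \<Rightarrow> bool)" where
  "phiR atm R = (\<lambda>x y. atm \<le> R x y)"

context
  fixes atm :: "'l::{finite,distrib_lattice,bounded_lattice}"
  assumes atm: "atm \<noteq> bot" "\<And>x. x \<le> atm \<Longrightarrow> x = bot \<or> x = atm"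
begin

lemma atm_sup: "atm \<le> sup x y \<longleftrightarrow> atm \<le> x \<or> atm \<le> y"
proof
  assume h: "atm \<le> sup x y"
  have "atm = inf atm (sup x y)" using h by (simp add: inf_absorb1)
  also have "\<dots> = sup (inf atm x) (inf atm y)" by (rule inf_sup_distrib1)
  finally have e: "atm = sup (inf atm x) (inf atm y)" .
  have 1: "inf atm x = bot \<or> inf atm x = atm" using atm(2)[of "inf atm x"] by simp
  have 2: "inf atm y = bot \<or> inf atm y = atm" using atm(2)[of "inf atm y"] by simp
  show "atm \<le> x \<or> atm \<le> y"
  proof (cases "inf atm x = atm")
    case True thus ?thesis by (simp add: le_iff_inf)
  next
    case False
    hence "inf atm x = bot" using 1 by simp
    hence "atm = inf atm y" using e by simp
    thus ?thesis by (simp add: le_iff_inf)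
  qed
next
  assume "atm \<le> x \<or> atm \<le> y"
  thus "atm \<le> sup x y" by (auto intro: le_supI1 le_supI2)
qed

lemma atm_Sup_fin: "finite A \<Longrightarrow> A \<noteq> {} \<Longrightarrow> atm \<le> Sup_fin A \<longleftrightarrow> (\<exists>x\<in>A. atm \<le> x)"
proof (induction A rule: finite_ne_induct)
  case (singleton x) thus ?case by simp
next
  case (insert x F) thus ?case by (simp add: atm_sup)
qed

lemma phi_mult: fixes R S :: "('x::finite, 'l) corr"
  shows "phiR atm (corr_mult R S) = bm (phiR atm R) (phiR atm S)"
proof -
  have "atm \<le> corr_mult R S x z \<longleftrightarrow> (\<exists>y. atm \<le> R x y \<and> atm \<le> S y z)" for x z
  proof -
    have fin: "finite {inf (R x y) (S y z) | y. True}" by simp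
    have ne: "{inf (R x y) (S y z) | y. True} \<noteq> {}" by blast
    have "atm \<le> corr_mult R S x z \<longleftrightarrow> (\<exists>v\<in>{inf (R x y) (S y z) | y. True}. atm \<le> v)"
      unfolding corr_mult_def using atm_Sup_fin[OF fin ne] by simp
    also have "\<dots> \<longleftrightarrow> (\<exists>y. atm \<le> inf (R x y) (S y z))" by blast
    also have "\<dots> \<longleftrightarrow> (\<exists>y. atm \<le> R x y \<and> atm \<le> S y z)" by simp
    finally show ?thesis .
  qed
  thus ?thesis unfolding bm_def phiR_def by (simp add: fun_eq_iff)
qed

lemma phi_one: "phiR atm (corr_one :: ('x::finite, 'l) corr) = (=)"
proof -
  have "\<not> atm \<le> bot" using atm(1) bot_unique by blast
  thus ?thesis by (auto simp: corr_one_def fun_eq_iff phiR_def)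
qed

end

definition piB :: "('x \<Rightarrow> 'x \<Rightarrow> bool) \<Rightarrow> 'k::field" where
  "piB B = (if bperm B then 1 else 0)"
definition ccB :: "('x \<Rightarrow> 'x \<Rightarrow> bool) \<Rightarrow> ('x \<Rightarrow> 'x \<Rightarrow> bool) \<Rightarrow> 'k::field" where
  "ccB R0 B = (if B \<in> borb R0 then 1 else 0)"

lemma orb_notperm: fixes R0 :: "'x::finite \<Rightarrow> 'x \<Rightarrow> bool"
  assumes "bprime R0" "B \<in> borb R0" shows "\<not> bperm B"
proof -
  have "bprime B" by (rule borb_prime[OF assms])
  thus ?thesis unfolding bprime_def by blast
qed

lemma piB_mult: fixes a :: "'x::finite \<Rightarrow> 'x \<Rightarrow> bool"
  shows "(piB (bm a b) :: 'k::field) = piB a * piB b"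
proof (cases "bperm a \<and> bperm b")
  case True
  hence "bperm (bm a b)" using bperm_mult by blast
  thus ?thesis using True unfolding piB_def by simp
next
  case False
  hence "\<not> bperm (bm a b)" using bperm_factor by blast
  thus ?thesis using False unfolding piB_def by auto
qed

lemma ccB_mult: fixes a :: "'x::finite \<Rightarrow> 'x \<Rightarrow> bool"
  assumes p: "bprime R0"
  shows "(ccB R0 (bm a b) :: 'k::field) = ccB R0 a * piB b + piB a * ccB R0 b"
proof (cases "bperm a")
  case a: True
  have na: "a \<notin> borb R0" using orb_notperm[OF p] a by blast
  show ?thesis
  proof (cases "bperm b")
    case True
    hence "bperm (bm a b)" using a bperm_mult by blast
    hence "bm a b \<notin> borb R0" using orb_notperm[OF p] by blast
    moreover have "b \<notin> borb R0" using orb_notperm[OF p] True by blast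
    ultimately show ?thesis using na by (simp add: ccB_def piB_def)
  next
    case False
    have "bm a b \<in> borb R0 \<longleftrightarrow> b \<in> borb R0" by (rule borb_left[OF a])
    thus ?thesis using a False na by (simp add: ccB_def piB_def)
  qed
next
  case a: False
  show ?thesis
  proof (cases "bperm b")
    case True
    have nb: "b \<notin> borb R0" using orb_notperm[OF p] True by blast
    have "bm a b \<in> borb R0 \<longleftrightarrow> a \<in> borb R0" by (rule borb_right[OF True])
    thus ?thesis using a True nb by (simp add: ccB_def piB_def)
  next
    case False
    have "bm a b \<notin> borb R0"
    proof
      assume "bm a b \<in> borb R0"
      hence "bprime (bm a b)" using borb_prime[OF p] by blast
      thus False using a False unfolding bprime_def by blast
    qed
    thus ?thesis using a False by (simp add: ccB_def piB_def)
  qed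
qed

definition rho :: "'l::{finite,distrib_lattice,bounded_lattice} \<Rightarrow> 'x \<Rightarrow> 'x \<Rightarrow> 'x \<Rightarrow> 'x \<Rightarrow> nat
    \<Rightarrow> ('x::finite, 'l) corr \<Rightarrow> 'k::field mat" where
  "rho atm a b c d n R = mrep n (piB (phiR atm R)) (ccB (R3 a b c) (phiR atm R))
      (ccB (R4 a b c d) (phiR atm R))"

lemma mrep_one: "mrep n 1 0 0 = (1\<^sub>m (2*n+1) :: 'k::field mat)"
  unfolding mrep_def by (rule eq_matI) auto

lemma mrep_NA: "mrep n 0 1 0 = (NA n :: 'k::field mat)"
  unfolding mrep_def by (rule eq_matI) (auto simp: NA_def)

lemma mrep_NB: "mrep n 0 0 1 = (NB n :: 'k::field mat)"
  unfolding mrep_def by (rule eq_matI) (auto simp: NB_def)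

definition E3 :: "'x \<Rightarrow> 'x \<Rightarrow> 'x \<Rightarrow> ('x, 'l::bounded_lattice) corr" where
  "E3 a b c = (\<lambda>x y. if R3 a b c x y then Orderings.top else bot)"
definition E4 :: "'x \<Rightarrow> 'x \<Rightarrow> 'x \<Rightarrow> 'x \<Rightarrow> ('x, 'l::bounded_lattice) corr" where
  "E4 a b c d = (\<lambda>x y. if R4 a b c d x y then Orderings.top else bot)"

context
  fixes atm :: "'l::{finite,distrib_lattice,bounded_lattice}" and a b c d :: "'x::finite"
  assumes atm: "atm \<noteq> bot" "\<And>x. x \<le> atm \<Longrightarrow> x = bot \<or> x = atm"
    and dist: "a \<noteq> b" "a \<noteq> c" "a \<noteq> d" "b \<noteq> c" "b \<noteq> d" "c \<noteq> d"
begin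

interpretation four a b c d using dist by unfold_locales

lemma R3_notin4: "R3 a b c \<notin> borb (R4 a b c d)"
  using borb_sym not_in_orb by blast

lemma rho_rep: "is_rep (2*n+1) (rho atm a b c d n :: ('x,'l) corr \<Rightarrow> 'k::field mat)"
  unfolding is_rep_def
proof (intro conjI allI)
  fix R show "rho atm a b c d n R \<in> carrier_mat (2*n+1) (2*n+1)" unfolding rho_def by (rule mrep_carrier)
next
  have "\<not> (=) \<in> borb (R3 a b c)" "\<not> (=) \<in> borb (R4 a b c d)"
    using orb_notperm[OF prime3] orb_notperm[OF prime4] bperm_one by blast+
  moreover have o: "phiR atm (corr_one::('x,'l) corr) = (=)" by (rule phi_one[OF atm])
  moreover have "bperm ((=)::'x \<Rightarrow> 'x \<Rightarrow> bool)" by (rule bperm_one)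
  ultimately show "rho atm a b c d n corr_one = 1\<^sub>m (2*n+1)"
    unfolding rho_def by (simp add: piB_def ccB_def mrep_one)
next
  fix R S :: "('x,'l) corr"
  show "rho atm a b c d n (corr_mult R S) = rho atm a b c d n R * rho atm a b c d n S"
  proof -
    have m: "phiR atm (corr_mult R S) = bm (phiR atm R) (phiR atm S)" by (rule phi_mult[OF atm])
    show ?thesis
      unfolding rho_def m mrep_mult piB_mult ccB_mult[OF prime3] ccB_mult[OF prime4]
      by (simp add: algebra_simps)
  qed
qed


lemma rho_E3: "rho atm a b c d n (E3 a b c) = (NA n :: 'k::field mat)"
proof -
  have "phiR atm (E3 a b c) = R3 a b c" using atm(1) by (auto simp: E3_def fun_eq_iff bot_unique phiR_def)
  moreover have "R3 a b c \<in> borb (R3 a b c)" by (rule borb_self)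
  moreover have "\<not> bperm (R3 a b c)" using orb_notperm[OF prime3 borb_self] .
  ultimately show ?thesis unfolding rho_def
    using R3_notin4 by (simp add: piB_def ccB_def mrep_NA)
qed

lemma rho_E4: "rho atm a b c d n (E4 a b c d) = (NB n :: 'k::field mat)"
proof -
  have "phiR atm (E4 a b c d) = R4 a b c d" using atm(1) by (auto simp: E4_def fun_eq_iff bot_unique phiR_def)
  moreover have "R4 a b c d \<in> borb (R4 a b c d)" by (rule borb_self)
  moreover have "\<not> bperm (R4 a b c d)" using orb_notperm[OF prime4 borb_self] .
  ultimately show ?thesis unfolding rho_def
    using not_in_orb by (simp add: piB_def ccB_def mrep_NB)
qed

end

lemma block_E_comm:
  fixes A D :: "'k::field mat"
  assumes A: "A \<in> carrier_mat s1 s1" and D: "D \<in> carrier_mat s2 s2"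
  shows "four_block_mat (1\<^sub>m s1) (0\<^sub>m s1 s2) (0\<^sub>m s2 s1) (0\<^sub>m s2 s2) * four_block_mat A (0\<^sub>m s1 s2) (0\<^sub>m s2 s1) D
       = four_block_mat A (0\<^sub>m s1 s2) (0\<^sub>m s2 s1) D * four_block_mat (1\<^sub>m s1) (0\<^sub>m s1 s2) (0\<^sub>m s2 s1) (0\<^sub>m s2 s2)"
proof -
  have "four_block_mat (1\<^sub>m s1) (0\<^sub>m s1 s2) (0\<^sub>m s2 s1) (0\<^sub>m s2 s2) * four_block_mat A (0\<^sub>m s1 s2) (0\<^sub>m s2 s1) D
     = four_block_mat (1\<^sub>m s1 * A + 0\<^sub>m s1 s2 * 0\<^sub>m s2 s1) (1\<^sub>m s1 * 0\<^sub>m s1 s2 + 0\<^sub>m s1 s2 * D)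
         (0\<^sub>m s2 s1 * A + 0\<^sub>m s2 s2 * 0\<^sub>m s2 s1) (0\<^sub>m s2 s1 * 0\<^sub>m s1 s2 + 0\<^sub>m s2 s2 * D)"
    by (rule mult_four_block_mat) (use A D in auto)
  also have "\<dots> = four_block_mat A (0\<^sub>m s1 s2) (0\<^sub>m s2 s1) (0\<^sub>m s2 s2)" using A D by simp
  also have "\<dots> = four_block_mat (A * 1\<^sub>m s1 + 0\<^sub>m s1 s2 * 0\<^sub>m s2 s1) (A * 0\<^sub>m s1 s2 + 0\<^sub>m s1 s2 * 0\<^sub>m s2 s2)
         (0\<^sub>m s2 s1 * 1\<^sub>m s1 + D * 0\<^sub>m s2 s1) (0\<^sub>m s2 s1 * 0\<^sub>m s1 s2 + D * 0\<^sub>m s2 s2)"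
    using A D by simp
  also have "\<dots> = four_block_mat A (0\<^sub>m s1 s2) (0\<^sub>m s2 s1) D * four_block_mat (1\<^sub>m s1) (0\<^sub>m s1 s2) (0\<^sub>m s2 s1) (0\<^sub>m s2 s2)"
    by (rule mult_four_block_mat[symmetric]) (use A D in auto)
  finally show ?thesis .
qed

lemma block_E_idem:
  shows "four_block_mat (1\<^sub>m s1) (0\<^sub>m s1 s2) (0\<^sub>m s2 s1) (0\<^sub>m s2 s2) * four_block_mat (1\<^sub>m s1) (0\<^sub>m s1 s2) (0\<^sub>m s2 s1) (0\<^sub>m s2 s2)
       = (four_block_mat (1\<^sub>m s1) (0\<^sub>m s1 s2) (0\<^sub>m s2 s1) (0\<^sub>m s2 s2) :: 'k::field mat)"
proof -
  have "four_block_mat (1\<^sub>m s1) (0\<^sub>m s1 s2) (0\<^sub>m s2 s1) (0\<^sub>m s2 s2) * four_block_mat (1\<^sub>m s1) (0\<^sub>m s1 s2) (0\<^sub>m s2 s1) (0\<^sub>m s2 s2)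
     = four_block_mat (1\<^sub>m s1 * 1\<^sub>m s1 + 0\<^sub>m s1 s2 * 0\<^sub>m s2 s1) (1\<^sub>m s1 * 0\<^sub>m s1 s2 + 0\<^sub>m s1 s2 * 0\<^sub>m s2 s2)
         (0\<^sub>m s2 s1 * 1\<^sub>m s1 + 0\<^sub>m s2 s2 * 0\<^sub>m s2 s1) (0\<^sub>m s2 s1 * 0\<^sub>m s1 s2 + 0\<^sub>m s2 s2 * (0\<^sub>m s2 s2 :: 'k mat))"
    by (rule mult_four_block_mat) auto
  also have "\<dots> = four_block_mat (1\<^sub>m s1) (0\<^sub>m s1 s2) (0\<^sub>m s2 s1) (0\<^sub>m s2 s2)" by simp
  finally show ?thesis .
qed

lemma indec:
  fixes \<rho> :: "('x::finite,'l::{distrib_lattice,bounded_lattice}) corr \<Rightarrow> 'k::field mat"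
  assumes rep: "is_rep (2*n+1) \<rho>" and n: "0 < n" and e3: "\<rho> E3' = NA n" and e4: "\<rho> E4' = NB n"
  shows "indecomposable (2*n+1, \<rho>)"
  unfolding indecomposable_def
proof (simp only: fst_conv snd_conv, intro conjI notI)
  show "is_rep (2*n+1) \<rho>" by (rule rep)
  show "0 < 2*n+1" by simp
  assume "\<exists>s t. is_rep (fst s) (snd s) \<and> is_rep (fst t) (snd t) \<and> 0 < fst s \<and> 0 < fst t \<and> rep_iso (2*n+1, \<rho>) (rep_sum s t)"
  then obtain s t where st: "is_rep (fst s) (snd s)" "is_rep (fst t) (snd t)" "0 < fst s" "0 < fst t"
    "rep_iso (2*n+1, \<rho>) (rep_sum s t)" by blast
  define m where "m = 2*n+1"
  define s1 where "s1 = fst s"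
  define s2 where "s2 = fst t"
  define \<sigma> where "\<sigma> a = four_block_mat (snd s a) (0\<^sub>m s1 s2) (0\<^sub>m s2 s1) (snd t a)" for a
  have Ac: "snd s a \<in> carrier_mat s1 s1" for a using st(1) unfolding is_rep_def s1_def by blast
  have Dc: "snd t a \<in> carrier_mat s2 s2" for a using st(2) unfolding is_rep_def s2_def by blast
  have rc: "\<rho> a \<in> carrier_mat m m" for a using rep unfolding is_rep_def m_def by blast
  from st(5) have ms: "m = s1 + s2" and
    "\<exists>P \<in> carrier_mat m m. invertible_mat P \<and> (\<forall>a. P * \<rho> a = \<sigma> a * P)"
    unfolding rep_iso_def rep_sum_def m_def s1_def s2_def \<sigma>_def by auto
  then obtain P where Pc: "P \<in> carrier_mat m m" and Pi: "invertible_mat P" and Pr: "\<And>a. P * \<rho> a = \<sigma> a * P"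
    by blast
  obtain Q where PQ0: "P * Q = 1\<^sub>m (dim_row P)" and QP0: "Q * P = 1\<^sub>m (dim_row Q)"
    using Pi unfolding invertible_mat_def inverts_mat_def by blast
  have dc: "dim_col Q = m" using arg_cong[OF PQ0, of dim_col] Pc by simp
  have dr: "dim_row Q = m" using arg_cong[OF QP0, of dim_col] Pc by simp
  have Qc: "Q \<in> carrier_mat m m" using dc dr by auto
  have PQ: "P * Q = 1\<^sub>m m" using PQ0 Pc by simp
  have QP: "Q * P = 1\<^sub>m m" using QP0 dr by simp
  have sc: "\<sigma> a \<in> carrier_mat m m" for a unfolding \<sigma>_def ms using Ac Dc by auto
  define E where "E = four_block_mat (1\<^sub>m s1) (0\<^sub>m s1 s2) (0\<^sub>m s2 s1) (0\<^sub>m s2 s2 :: 'k mat)"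
  have Ec: "E \<in> carrier_mat m m" unfolding E_def ms by auto
  have Es: "E * \<sigma> a = \<sigma> a * E" for a unfolding E_def \<sigma>_def by (rule block_E_comm[OF Ac Dc])
  have EE: "E * E = E" unfolding E_def by (rule block_E_idem)
  note cs = Pc Qc Ec sc rc
  have as: "\<And>A B C :: 'k mat. A \<in> carrier_mat m m \<Longrightarrow> B \<in> carrier_mat m m \<Longrightarrow> C \<in> carrier_mat m m \<Longrightarrow> A * B * C = A * (B * C)"
    by (rule assoc_mult_mat)
  have mm: "\<And>A B :: 'k mat. A \<in> carrier_mat m m \<Longrightarrow> B \<in> carrier_mat m m \<Longrightarrow> A * B \<in> carrier_mat m m"
    by simp
  have l1: "\<And>A :: 'k mat. A \<in> carrier_mat m m \<Longrightarrow> 1\<^sub>m m * A = A" by (rule left_mult_one_mat)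
  have r1: "\<And>A :: 'k mat. A \<in> carrier_mat m m \<Longrightarrow> A * 1\<^sub>m m = A" by (rule right_mult_one_mat)
  have R1: "P * (\<rho> a * Y) = \<sigma> a * (P * Y)" if "Y \<in> carrier_mat m m" for a Y
  proof -
    have "P * (\<rho> a * Y) = (P * \<rho> a) * Y" using that by (simp add: as mm l1 r1 cs)
    also have "\<dots> = (\<sigma> a * P) * Y" by (simp add: Pr)
    also have "\<dots> = \<sigma> a * (P * Y)" using that by (simp add: as mm l1 r1 cs)
    finally show ?thesis .
  qed
  have R2: "E * (\<sigma> a * Y) = \<sigma> a * (E * Y)" if "Y \<in> carrier_mat m m" for a Y
  proof -
    have "E * (\<sigma> a * Y) = (E * \<sigma> a) * Y" using that by (simp add: as mm l1 r1 cs)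
    also have "\<dots> = (\<sigma> a * E) * Y" by (simp add: Es)
    also have "\<dots> = \<sigma> a * (E * Y)" using that by (simp add: as mm l1 r1 cs)
    finally show ?thesis .
  qed
  have R3: "Q * \<sigma> a = \<rho> a * Q" for a
  proof -
    have "Q * \<sigma> a = Q * (\<sigma> a * (P * Q))" using right_mult_one_mat[OF sc[of a]] by (simp add: PQ)
    also have "\<dots> = Q * (P * (\<rho> a * Q))" using R1[of Q a] Qc by simp
    also have "\<dots> = (Q * P) * (\<rho> a * Q)" using as[OF Qc Pc mult_carrier_mat[OF rc Qc]] by simp
    also have "\<dots> = \<rho> a * Q" using left_mult_one_mat[OF mult_carrier_mat[OF rc Qc]] by (simp add: QP)
    finally show ?thesis .
  qed
  define X where "X = Q * (E * P)"
  have Xc: "X \<in> carrier_mat m m" unfolding X_def using cs by simp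
  have XA: "X * \<rho> a = \<rho> a * X" for a
  proof -
    have "X * \<rho> a = Q * (E * (P * \<rho> a))" unfolding X_def by (simp add: as mm l1 r1 cs)
    also have "\<dots> = Q * (E * (\<sigma> a * P))" by (simp add: Pr)
    also have "\<dots> = Q * (\<sigma> a * (E * P))" using R2[of P a] Pc by simp
    also have "\<dots> = (Q * \<sigma> a) * (E * P)" by (simp add: as mm l1 r1 cs)
    also have "\<dots> = (\<rho> a * Q) * (E * P)" by (simp add: R3)
    also have "\<dots> = \<rho> a * X" unfolding X_def by (simp add: as mm l1 r1 cs)
    finally show ?thesis .
  qed
  have XX: "X * X = X"
  proof -
    have "X * X = Q * (E * ((P * Q) * (E * P)))" unfolding X_def by (simp add: as mm l1 r1 cs)
    also have "\<dots> = Q * ((E * E) * P)" by (simp add: as mm l1 r1 cs PQ)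
    also have "\<dots> = X" unfolding X_def by (simp add: EE)
    finally show ?thesis .
  qed
  have EX: "E = P * (X * Q)"
  proof -
    have "P * (X * Q) = (P * Q) * E * (P * Q)" unfolding X_def by (simp add: as mm l1 r1 cs)
    also have "\<dots> = E" using cs by (simp add: PQ)
    finally show ?thesis by simp
  qed
  have "X = 0\<^sub>m (2*n+1) (2*n+1) \<or> X = 1\<^sub>m (2*n+1)"
  proof (rule commut_idem[OF _ n])
    show "X \<in> carrier_mat (2*n+1) (2*n+1)" using Xc m_def by simp
    show "X * NA n = NA n * X" using XA[of E3'] e3 by simp
    show "X * NB n = NB n * X" using XA[of E4'] e4 by simp
    show "X * X = X" by (rule XX)
  qed
  thus False
  proof
    assume "X = 0\<^sub>m (2*n+1) (2*n+1)"
    hence "E = 0\<^sub>m m m" using EX cs m_def by simp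
    hence "E $$ (0,0) = 0" using st(3) s1_def ms by simp
    moreover have "E $$ (0,0) = 1" unfolding E_def using st(3) s1_def by simp
    ultimately show False by simp
  next
    assume "X = 1\<^sub>m (2*n+1)"
    hence "E = 1\<^sub>m m" using EX cs m_def PQ by simp
    hence "E $$ (s1,s1) = 1" using st(4) s2_def ms by simp
    moreover have "E $$ (s1,s1) = 0" unfolding E_def using st(4) s2_def by simp
    ultimately show False by simp
  qed
qed

theorem theorem11:
  assumes "card (UNIV :: 'x set) \<ge> 4"
    and "card (UNIV :: 'l set) > 1"
  shows "infinite_rep_type TYPE('k::field)
           TYPE(('x::finite, 'l::{finite,distrib_lattice,bounded_lattice}) corr)"
proof -
  obtain a b c d :: 'x where dist: "a \<noteq> b" "a \<noteq> c" "a \<noteq> d" "b \<noteq> c" "b \<noteq> d" "c \<noteq> d"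
    using four_elems[OF assms(1)] by blast
  obtain atm :: 'l where atm: "atm \<noteq> bot" "\<And>x. x \<le> atm \<Longrightarrow> x = bot \<or> x = atm"
    using atom_exists[OF assms(2)] by blast
  define F where "F n = (2 * Suc n + 1, rho atm a b c d (Suc n) :: ('x,'l) corr \<Rightarrow> 'k mat)" for n
  have injF: "inj F"
  proof (rule injI)
    fix n n' assume "F n = F n'"
    hence "2 * Suc n + 1 = 2 * Suc n' + 1" unfolding F_def by simp
    thus "n = n'" by simp
  qed
  have inf: "infinite (range F)"
  proof
    assume "finite (range F)"
    hence "finite (UNIV :: nat set)" using finite_imageD[of F UNIV] injF by simp
    thus False by simp
  qed
  have ind: "indecomposable r" if "r \<in> range F" for r
  proof -
    obtain n where r: "r = F n" using \<open>r \<in> range F\<close> by blast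
    have "indecomposable (2 * Suc n + 1, rho atm a b c d (Suc n) :: ('x,'l) corr \<Rightarrow> 'k mat)"
    proof (rule indec)
      show "is_rep (2 * Suc n + 1) (rho atm a b c d (Suc n) :: ('x,'l) corr \<Rightarrow> 'k mat)"
        by (rule rho_rep[OF atm dist])
      show "0 < Suc n" by simp
      show "(rho atm a b c d (Suc n) :: ('x,'l) corr \<Rightarrow> 'k mat) (E3 a b c) = NA (Suc n)"
        by (rule rho_E3[OF atm dist])
      show "(rho atm a b c d (Suc n) :: ('x,'l) corr \<Rightarrow> 'k mat) (E4 a b c d) = NB (Suc n)"
        by (rule rho_E4[OF atm dist])
    qed
    thus ?thesis unfolding r F_def .
  qed
  have iso: "r = s" if "r \<in> range F" "s \<in> range F" "rep_iso r s" for r s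
  proof -
    obtain n where r: "r = F n" using \<open>r \<in> range F\<close> by blast
    obtain n' where s: "s = F n'" using \<open>s \<in> range F\<close> by blast
    have "fst r = fst s" using \<open>rep_iso r s\<close> unfolding rep_iso_def by blast
    hence "n = n'" unfolding r s F_def by simp
    thus ?thesis using r s by simp
  qed
  have "infinite (range F) \<and> (\<forall>r\<in>range F. indecomposable r) \<and> (\<forall>r\<in>range F. \<forall>s\<in>range F. rep_iso r s \<longrightarrow> r = s)"
    using inf ind iso by blast
  thus ?thesis unfolding infinite_rep_type_def by (intro exI[of _ "range F"])
qed

end
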